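(* Consider the voter model with zealots on the complete graph with $n$ nodes, $z_0$ zealots holding opinion $0$ and $z_1$ zealots holding opinion $1$, where $z_0+z_1>0$. Let $N_1(t)$ be the number of opinion-1 holders at time $t$ (including 1-zealots), a continuous-time Markov chain on $\mathcal{S}=\{z_1,\ldots,n-z_0\}$, and let $\boldsymbol{\pi}=(\pi_k)_{k\in\mathcal{S}}$ be its stationary distribution, i.e. the probability vector on $\mathcal{S}$ satisfying $\boldsymbol{\pi}Q=0$, where $Q$ is the transition rate matrix with $q_{k,k-1}=(k-z_1)(n-k)/(n-1)$, $q_{k,k+1}=k(n-k-z_0)/(n-1)$, $q_{k,k}=-q_{k,k-1}-q_{k,k+1}$ and all other entries zero. Then the expected number of opinion-1 holders at equilibrium is $$\mathbb{E}_{\boldsymbol{\pi}}N_1=\sum_{k\in\mathcal{S}}k\,\pi_k=n\,\frac{z_1}{z_0+z_1}.$$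
   Context: Model: $n$ users are the nodes of a complete graph without self-loops, each holding opinion $0$ or $1$. Among them, $z_0\ge 0$ are 0-zealots (always hold opinion 0) and $z_1\ge0$ are 1-zealots (always hold opinion 1), with $z_0+z_1>0$ and $z_0+z_1\le n$; the remaining users are non-zealots. Each user has an independent exponential clock of rate 1; when a non-zealot's clock rings, that user picks one of the other $n-1$ users uniformly at random and adopts their current opinion; zealots never change opinion. $N_1(t)$ counts users holding opinion 1 at time $t$, including 1-zealots; it is a birth-and-death chain on $\mathcal{S}$ with the rates given in the claim. *)

theory Defs
  imports Complex_Main
begin

definition vz_states :: "nat \<Rightarrow> nat \<Rightarrow> nat \<Rightarrow> nat set" where
  "vz_states n z0 z1 = {z1 .. n - z0}"

definition vz_rate :: "nat \<Rightarrow> nat \<Rightarrow> nat \<Rightarrow> nat \<Rightarrow> nat \<Rightarrow> real" where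
  "vz_rate n z0 z1 k j =
     (let down = (real k - real z1) * (real n - real k) / (real n - 1);
          up = real k * (real n - real k - real z0) / (real n - 1)
      in if int j = int k - 1 then down
         else if j = k + 1 then up
         else if j = k then - down - up
         else 0)"

definition vz_stationary :: "nat \<Rightarrow> nat \<Rightarrow> nat \<Rightarrow> (nat \<Rightarrow> real) \<Rightarrow> bool" where
  "vz_stationary n z0 z1 p \<longleftrightarrow>
     (\<forall>k\<in>vz_states n z0 z1. p k \<ge> 0) \<and>
     (\<Sum>k\<in>vz_states n z0 z1. p k) = 1 \<and>
     (\<forall>j\<in>vz_states n z0 z1. (\<Sum>k\<in>vz_states n z0 z1. p k * vz_rate n z0 z1 k j) = 0)"

end

theory Submission
  imports Defs
begin

lemma row_sum:
  fixes n z0 z1 k :: nat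
  assumes k: "k \<in> {z1..n - z0}" and le: "z0 + z1 \<le> n"
  shows "(\<Sum>j\<in>{z1..n - z0}. vz_rate n z0 z1 k j * real j)
         = (real z1 * real n - real k * (real z0 + real z1)) / (real n - 1)"
proof -
  define down where "down = (real k - real z1) * (real n - real k) / (real n - 1)"
  define up where "up = real k * (real n - real k - real z0) / (real n - 1)"
  define g where "g j = vz_rate n z0 z1 k j * real j" for j
  have r: "vz_rate n z0 z1 k j = (if int j = int k - 1 then down else if j = k+1 then up
            else if j = k then -down-up else 0)" for j
    by (simp add: vz_rate_def Let_def down_def up_def)
  define S where "S = {z1..n - z0}"
  define T where "T = {k - 1, k, k + 1}"
  have kz1: "k = z1 \<Longrightarrow> down = 0" by (simp add: down_def)
  have kz0: "k = n - z0 \<Longrightarrow> up = 0" using le by (simp add: up_def of_nat_diff)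
  have "(\<Sum>j\<in>S. g j) = (\<Sum>j\<in>S \<union> T. g j)"
  proof (rule sum.mono_neutral_left)
    show "\<forall>i\<in>S \<union> T - S. g i = 0"
    proof
      fix i assume i: "i \<in> S \<union> T - S"
      then have "i \<in> T" "i \<notin> S" by auto
      then consider "i = k - 1" | "i = k + 1" | "i = k" unfolding T_def by auto
      then show "g i = 0"
      proof cases
        case 1
        then have "k = z1 \<or> k = 0" using k \<open>i \<notin> S\<close> unfolding S_def by auto
        then show ?thesis using 1 kz1 k unfolding g_def r by auto
      next
        case 2
        then have "k = n - z0" using k \<open>i \<notin> S\<close> unfolding S_def by auto
        then show ?thesis using 2 kz0 unfolding g_def r by auto
      next
        case 3 then show ?thesis using k \<open>i \<notin> S\<close> unfolding S_def by auto
      qed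
    qed
  qed (auto simp: S_def T_def)
  also have "\<dots> = (\<Sum>j\<in>T. g j)"
    by (rule sum.mono_neutral_right) (auto simp: S_def T_def g_def r)
  also have "\<dots> = up - down"
  proof (cases "k = 0")
    case True
    then have "z1 = 0" using k by auto
    then have "down = 0" using True by (simp add: down_def)
    have "T = {k, k+1}" using True by (auto simp: T_def)
    then have "(\<Sum>j\<in>T. g j) = g k + g (k+1)" by simp
    also have "\<dots> = up" unfolding g_def r using True by simp
    finally show ?thesis using \<open>down = 0\<close> by simp
  next
    case False
    have d: "k - 1 \<notin> {k, k+1}" "k \<notin> {k+1}" using False by auto
    have s1: "(\<Sum>j\<in>T. g j) = g (k-1) + (\<Sum>j\<in>{k,k+1}. g j)"
      unfolding T_def by (rule sum.insert[OF _ d(1)]) simp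
    have s2: "(\<Sum>j\<in>{k,k+1}. g j) = g k + (\<Sum>j\<in>{k+1}. g j)"
      by (rule sum.insert[OF _ d(2)]) simp
    have e1: "g (k-1) = down * (real k - 1)"
    proof -
      have "int (k-1) = int k - 1" using False by simp
      then have "vz_rate n z0 z1 k (k-1) = down" unfolding r by simp
      moreover have "real (k-1) = real k - 1" using False by (simp add: of_nat_diff)
      ultimately show ?thesis unfolding g_def by simp
    qed
    have e2: "g k = (-down-up) * real k" unfolding g_def r by simp
    have e3: "g (k+1) = up * (real k + 1)" unfolding g_def r by simp
    show ?thesis using s1 s2 e1 e2 e3 by (simp add: algebra_simps)
  qed
  also have "\<dots> = (real z1 * real n - real k * (real z0 + real z1)) / (real n - 1)"
  proof -
    have "up - down = (real k * (real n - real k - real z0) - (real k - real z1) * (real n - real k)) / (real n - 1)"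
      unfolding up_def down_def by (rule diff_divide_distrib[symmetric])
    also have "real k * (real n - real k - real z0) - (real k - real z1) * (real n - real k)
        = real z1 * real n - real k * (real z0 + real z1)" by (simp add: algebra_simps)
    finally show ?thesis .
  qed
  finally show ?thesis unfolding S_def g_def .
qed

theorem theorem3:
  fixes n z0 z1 :: nat and p :: "nat \<Rightarrow> real"
  assumes "z0 + z1 > 0" and "z0 + z1 \<le> n"
    and "vz_stationary n z0 z1 p"
  shows "(\<Sum>k\<in>vz_states n z0 z1. real k * p k) = real n * real z1 / real (z0 + z1)"
proof -
  define S where "S = {z1..n - z0}"
  have st2: "(\<Sum>k\<in>S. p k) = 1"
    and st3: "\<And>j. j \<in> S \<Longrightarrow> (\<Sum>k\<in>S. p k * vz_rate n z0 z1 k j) = 0"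
    using assms(3) unfolding vz_stationary_def vz_states_def S_def by blast+
  have "real (z0 + z1) > 0" using assms(1) by (simp only: of_nat_0_less_iff)
  then have pos: "real z0 + real z1 > 0" by simp
  have key: "(real z0 + real z1) * (\<Sum>k\<in>S. real k * p k) = real z1 * real n"
  proof (cases "n = 1")
    case True
    then have "S = {z1}" using assms(1,2) unfolding S_def by auto
    then have "p z1 = 1" "(\<Sum>k\<in>S. real k * p k) = real z1 * p z1" using st2 by simp_all
    moreover have "real z0 + real z1 = 1" using True assms(1,2) by linarith
    ultimately show ?thesis using True by simp
  next
    case False
    then have n2: "real n - 1 > 0" using assms(1,2) by auto
    have "0 = (\<Sum>j\<in>S. real j * (\<Sum>k\<in>S. p k * vz_rate n z0 z1 k j))"
      using st3 by simp
    also have "\<dots> = (\<Sum>k\<in>S. p k * (\<Sum>j\<in>S. vz_rate n z0 z1 k j * real j))"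
      unfolding sum_distrib_left
      by (subst sum.swap) (simp add: mult_ac)
    also have "\<dots> = (\<Sum>k\<in>S. p k * ((real z1 * real n - real k * (real z0 + real z1)) / (real n - 1)))"
      using row_sum[OF _ assms(2)] unfolding S_def by (intro sum.cong) auto
    also have "\<dots> = (\<Sum>k\<in>S. p k * (real z1 * real n) - (real z0 + real z1) * (real k * p k)) / (real n - 1)"
      unfolding sum_divide_distrib by (intro sum.cong) (simp_all add: algebra_simps)
    also have "\<dots> = ((\<Sum>k\<in>S. p k) * (real z1 * real n) - (real z0 + real z1) * (\<Sum>k\<in>S. real k * p k)) / (real n - 1)"
      by (simp only: sum_subtractf sum_distrib_left sum_distrib_right)
    finally have "((\<Sum>k\<in>S. p k) * (real z1 * real n) - (real z0 + real z1) * (\<Sum>k\<in>S. real k * p k)) = 0"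
      using n2 by simp
    then show ?thesis using st2 by simp
  qed
  show ?thesis unfolding vz_states_def S_def[symmetric] using key pos
    by (simp add: field_simps)
qed

end
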